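(* Let $N,W$ be positive integers and let $P$ be a nonzero polynomial of degree at most $N$ with integer coefficients of absolute value at most $W$. If $1$ is a root of $P$ of order $k$, then \[k\le\left\lfloor\frac{16}{7}W^{1/4}\sqrt{N}\right\rfloor+4.\]
   Context: A number $\alpha$ is a root of $P$ of order $k$ if $P(x)=Q(x)(x-\alpha)^k$ for some polynomial $Q$ with $Q(\alpha)\neq0$. *)

theory Defs
  imports "HOL-Computational_Algebra.Polynomial"
begin

definition root_of_order :: "'a::comm_ring_1 \<Rightarrow> 'a poly \<Rightarrow> nat \<Rightarrow> bool" where
  "root_of_order \<alpha> P k \<longleftrightarrow> (\<exists>Q. P = Q * [:-\<alpha>, 1:] ^ k \<and> poly Q \<alpha> \<noteq> 0)"

end

theory Submission imports Defs begin

definition xd :: "int poly \<Rightarrow> int poly" where "xd R = pCons 0 (pderiv R)"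

lemma coeff_xd: "coeff (xd R) j = of_nat j * coeff R j"
  by (cases j) (simp_all add: xd_def coeff_pderiv)

lemma coeff_xd_pow: "coeff ((xd ^^ i) R) j = of_nat j ^ i * coeff R j"
  by (induction i) (simp_all add: coeff_xd)

lemma degree_xd_pow: "degree ((xd ^^ i) R) \<le> degree R"
  by (rule degree_le) (auto simp: coeff_xd_pow coeff_eq_0)

lemma dvd_xd:
  assumes "[:-1,1:]^(Suc r) dvd R" shows "[:-1,1:]^r dvd xd R"
proof -
  obtain S where R: "R = [:-1,1:]^(Suc r) * S" using assms by (auto elim: dvdE)
  have "pderiv R = [:-1,1:]^r * ([:-1,1:] * pderiv S + smult (of_nat (Suc r)) S * pderiv [:-1,1::int:])"
    unfolding R pderiv_mult pderiv_power_Suc by (simp add: algebra_simps)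
  then have "[:-1,1:]^r dvd pderiv R" by simp
  moreover have "pCons 0 (pderiv R) = [:0,1:] * pderiv R" by simp
  ultimately show ?thesis unfolding xd_def by (metis dvd_mult2 mult.commute)
qed

lemma dvd_xd_pow:
  assumes "i \<le> k" "[:-1,1:]^k dvd R" shows "[:-1,1:]^(k-i) dvd (xd ^^ i) R"
  using assms
proof (induction i)
  case 0 then show ?case by simp
next
  case (Suc i)
  then have "[:-1,1:]^(Suc (k - Suc i)) dvd (xd ^^ i) R"
    by (metis Suc_diff_Suc Suc_le_lessD less_imp_le_nat)
  then show ?case by (simp add: dvd_xd)
qed

lemma poly_sum_N:
  fixes p :: "'a::comm_semiring_1 poly"
  assumes "degree p \<le> N" shows "poly p x = (\<Sum>j\<le>N. coeff p j * x ^ j)"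
  unfolding poly_altdef
  by (rule sum.mono_neutral_left) (use assms in \<open>auto simp: coeff_eq_0\<close>)

lemma moment:
  assumes "i < k" "[:-1,1:]^k dvd P" "degree P \<le> N"
  shows "(\<Sum>j\<le>N. coeff P j * int j ^ i) = 0"
proof -
  have "[:-1,1:]^(k-i) dvd (xd ^^ i) P" using assms dvd_xd_pow by simp
  moreover have "[:-1,1:] dvd [:-1,1::int:]^(k-i)" using assms(1)
    by (metis dvd_power zero_less_diff)
  ultimately have "[:-1,1:] dvd (xd ^^ i) P" using dvd_trans by blast
  then have "poly ((xd ^^ i) P) 1 = 0" using poly_eq_0_iff_dvd by fastforce
  moreover have "degree ((xd ^^ i) P) \<le> N" using degree_xd_pow assms(3) le_trans by blast
  ultimately show ?thesis by (simp add: poly_sum_N coeff_xd_pow mult.commute)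
qed

lemma moment_real:
  fixes f :: "real poly"
  assumes "degree f < k" "[:-1,1:]^k dvd P" "degree P \<le> N"
  shows "(\<Sum>j\<le>N. of_int (coeff P j) * poly f (real j)) = 0"
proof -
  have "(\<Sum>j\<le>N. of_int (coeff P j) * poly f (real j))
      = (\<Sum>j\<le>N. \<Sum>i\<le>degree f. coeff f i * (of_int (coeff P j) * real j ^ i))"
    by (simp add: poly_altdef sum_distrib_left algebra_simps)
  also have "\<dots> = (\<Sum>i\<le>degree f. coeff f i * (\<Sum>j\<le>N. of_int (coeff P j) * real j ^ i))"
    by (subst sum.swap) (simp add: sum_distrib_left)
  also have "\<dots> = 0"
  proof (rule sum.neutral, rule ballI)
    fix i assume "i \<in> {..degree f}"
    then have "i < k" using assms(1) by auto
    then have "(\<Sum>j\<le>N. coeff P j * int j ^ i) = 0" using moment assms by blast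
    then have "real_of_int (\<Sum>j\<le>N. coeff P j * int j ^ i) = 0" by simp
    then show "coeff f i * (\<Sum>j\<le>N. of_int (coeff P j) * real j ^ i) = 0" by simp
  qed
  finally show ?thesis .
qed

fun chb :: "real poly \<Rightarrow> nat \<Rightarrow> real poly \<times> real poly" where
  "chb u 0 = (1, 0)"
| "chb u (Suc m) = (u * fst (chb u m) - (1 - u^2) * snd (chb u m), fst (chb u m) + u * snd (chb u m))"

lemma chb_pell:
  "(poly (fst (chb u m)) x)^2 + (1 - (poly u x)^2) * (poly (snd (chb u m)) x)^2 = 1"
proof (induction m)
  case 0 then show ?case by simp
next
  case (Suc m)
  define t where "t = poly (fst (chb u m)) x"
  define v where "v = poly (snd (chb u m)) x"
  define w where "w = poly u x"
  have "(w * t - (1 - w^2) * v)^2 + (1 - w^2) * (t + w * v)^2 = t^2 + (1 - w^2) * v^2"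
    by (simp add: power2_eq_square algebra_simps)
  with Suc show ?case by (simp add: t_def v_def w_def)
qed

lemma chb_one:
  assumes "poly u x = 1"
  shows "poly (fst (chb u m)) x = 1 \<and> poly (snd (chb u m)) x = real m"
  by (induction m) (simp_all add: assms)

lemma chb_degree:
  assumes "degree u \<le> 1"
  shows "degree (fst (chb u m)) \<le> m \<and> degree (snd (chb u m)) \<le> m - 1"
proof (induction m)
  case 0 then show ?case by simp
next
  case (Suc m)
  show ?case
  proof (cases m)
    case 0 then show ?thesis using assms by simp
  next
    case (Suc m')
    have d1: "degree (u * fst (chb u m)) \<le> Suc m"
      using degree_mult_le[of u "fst (chb u m)"] Suc.IH assms by linarith
    have d2: "degree (1 - u^2) \<le> 2"
      using degree_diff_le[of 1 2 "u^2"] degree_power_le[of u 2] assms by simp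
    have d3: "degree ((1 - u^2) * snd (chb u m)) \<le> Suc m"
      using degree_mult_le[of "1 - u^2" "snd (chb u m)"] d2 Suc.IH Suc by linarith
    have d4: "degree (u * snd (chb u m)) \<le> m"
      using degree_mult_le[of u "snd (chb u m)"] Suc.IH assms Suc by linarith
    show ?thesis
      using degree_diff_le[OF d1 d3] degree_add_le[of "fst (chb u m)" m "u * snd (chb u m)"] Suc.IH d4
      by simp
  qed
qed

lemma sum_inv_sq: "n \<ge> 1 \<Longrightarrow> (\<Sum>i=1..n. 1 / (real i)^2) \<le> 5/3 - 2 / (2 * real n + 1)"
proof (induction n rule: dec_induct)
  case base then show ?case by simp
next
  case (step n)
  have "1 / (real (Suc n))^2 \<le> 2 / (2 * real n + 1) - 2 / (2 * real (Suc n) + 1)"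
  proof -
    have p: "0 < 2 * real n + 1" "0 < 2 * real (Suc n) + 1" "0 < (real (Suc n))^2" by auto
    have "2 / (2 * real n + 1) - 2 / (2 * real (Suc n) + 1) = 4 / ((2 * real n + 1) * (2 * real n + 3))"
      using p by (simp add: field_simps)
    moreover have "1 / (real (Suc n))^2 \<le> 4 / ((2 * real n + 1) * (2 * real n + 3))"
    proof -
      have a: "0 < 4 * (real (Suc n))^2" "0 < (2 * real n + 1) * (2 * real n + 3)" by auto
      have "1 / (real (Suc n))^2 = 4 / (4 * (real (Suc n))^2)" by simp
      also have "\<dots> \<le> 4 / ((2 * real n + 1) * (2 * real n + 3))"
        apply (rule divide_left_mono)
          apply (simp add: power2_eq_square algebra_simps)
         apply simp
        using a by (rule mult_pos_pos)
      finally show ?thesis .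
    qed
    ultimately show ?thesis by simp
  qed
  with step show ?case by simp
qed

lemma sum_inv_sq': "(\<Sum>i=1..n. 1 / (real i)^2) \<le> 5/3"
proof (cases "n \<ge> 1")
  case True
  then show ?thesis using sum_inv_sq[OF True] by (smt (verit) divide_nonneg_pos of_nat_0_le_iff)
qed simp

theorem lemma4p6:
  fixes N W k :: nat and P :: "int poly"
  assumes "N > 0" and "W > 0"
    and "P \<noteq> 0" and "degree P \<le> N"
    and "\<forall>i. \<bar>coeff P i\<bar> \<le> int W"
    and "root_of_order 1 P k"
  shows "int k \<le> \<lfloor>16 / 7 * root 4 (real W) * sqrt (real N)\<rfloor> + 4"
proof (rule ccontr)
  assume neg: "\<not> ?thesis"
  define X where "X = 16 / 7 * root 4 (real W) * sqrt (real N)"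
  have X0: "0 < X" using assms(1,2) by (simp add: X_def)
  have "\<not> int k \<le> \<lfloor>X\<rfloor> + 4" using neg unfolding X_def .
  then have "int k \<ge> \<lfloor>X\<rfloor> + 5" by linarith
  then have "real k \<ge> real_of_int \<lfloor>X\<rfloor> + 5"
    by (metis of_int_le_iff of_int_of_nat_eq of_int_add of_int_numeral)
  then have kX: "real k > X + 4" using real_of_int_floor_add_one_gt[of X] by linarith
  define M where "M = (k - 1) div 4"
  have k5: "k \<ge> 5" using kX X0 by linarith
  have "k - 1 \<le> 4 * M + 3" unfolding M_def by linarith
  then have "real k \<le> 4 * real M + 4" using k5 by linarith
  then have MX: "4 * real M > X" using kX by linarith
  have M1: "M \<ge> 1" using MX X0 by (metis not_less_iff_gr_or_eq less_one of_nat_0 mult_zero_right not_le)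
  have X4: "X^4 = (16/7)^4 * real W * (real N)^2"
  proof -
    have "X^4 = (16/7)^4 * (root 4 (real W))^4 * (sqrt (real N))^4"
      unfolding X_def by (simp only: power_mult_distrib)
    moreover have "(sqrt (real N))^4 = (real N)^2"
      using power_mult[of "sqrt (real N)" 2 2] by simp
    moreover have "(root 4 (real W))^4 = real W" by simp
    ultimately show ?thesis by simp
  qed
  have "X^4 < (4 * real M)^4" using MX X0 by (intro power_strict_mono) auto
  then have "(16/7)^4 * real W * (real N)^2 < 256 * (real M)^4" using X4 by simp
  moreover have "5/3 * real W * (real N)^2 \<le> (16/7)^4 / 16 * real W * (real N)^2"
    by (intro mult_right_mono) (auto simp: power_divide)
  ultimately have key: "5/3 * real W * (real N)^2 < 16 * (real M)^4" by simp
  define m0 where "m0 = (LEAST j. coeff P j \<noteq> 0)"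
  have ex: "coeff P (degree P) \<noteq> 0" using assms(3) by simp
  have am0: "coeff P m0 \<noteq> 0" unfolding m0_def using ex by (rule LeastI)
  have below: "\<And>j. j < m0 \<Longrightarrow> coeff P j = 0" unfolding m0_def using not_less_Least by blast
  have m0N: "m0 \<le> N" using le_degree[OF am0] assms(4) by linarith
  define u :: "real poly" where "u = [: 1 + 2 * real m0 / real N, - 2 / real N :]"
  have polyu: "\<And>x. poly u x = 1 + 2 * real m0 / real N - 2 * x / real N"
    by (simp add: u_def)
  have degu: "degree u \<le> 1" by (simp add: u_def)
  define V where "V = snd (chb u M)"
  define f where "f = (V * (1 + u))^4"
  have degV: "degree V \<le> M - 1" using chb_degree[OF degu] V_def by blast
  have deg1u: "degree (1 + u) \<le> 1" using degree_add_le[of 1 1 u] degu by simp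
  have "degree (V * (1 + u)) \<le> M" using degree_mult_le[of V "1 + u"] degV deg1u M1 by linarith
  then have "degree f \<le> M * 4" unfolding f_def using degree_power_le[of "V * (1 + u)" 4]
    by (meson le_trans mult_le_mono1)
  then have degf: "degree f < k" unfolding M_def using k5 by linarith
  have dvdP: "[:-1,1:]^k dvd P" using assms(6) unfolding root_of_order_def by auto
  define g where "g j = real_of_int (coeff P j) * poly f (real j)" for j
  have sum0: "(\<Sum>j\<le>N. g j) = 0" unfolding g_def using moment_real[OF degf dvdP assms(4)] by simp
  have "(\<Sum>j\<le>N. g j) = (\<Sum>j\<in>{m0..N}. g j)"
    by (rule sum.mono_neutral_right) (auto simp: g_def below)
  also have "\<dots> = g m0 + (\<Sum>j\<in>{Suc m0..N}. g j)" using m0N by (simp add: sum.atLeast_Suc_atMost)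
  finally have split: "g m0 = - (\<Sum>j\<in>{Suc m0..N}. g j)" using sum0 by simp
  have um0: "poly u (real m0) = 1" using polyu assms(1) by simp
  have fm0: "poly f (real m0) = 16 * (real M)^4"
    using chb_one[OF um0, of M] um0 by (simp add: f_def V_def)
  have fbound: "0 \<le> poly f (real j) \<and> poly f (real j) \<le> (real N)^2 / (real (j - m0))^2"
    if j: "j \<in> {Suc m0..N}" for j
  proof -
    define w where "w = poly u (real j)"
    define v where "v = poly V (real j)"
    have w: "w = 1 - 2 * real (j - m0) / real N" using polyu j by (simp add: w_def of_nat_diff field_simps)
    have jm: "1 \<le> real (j - m0)" "real (j - m0) \<le> real N" using j by auto
    have q1: "0 < 2 * real (j - m0) / real N" using jm assms(1) by simp
    have q2: "2 * real (j - m0) / real N \<le> 2" using jm assms(1) by (simp add: divide_le_eq)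
    have wl: "-1 \<le> w" "w < 1" using w q1 q2 by linarith+
    have pell: "(poly (fst (chb u M)) (real j))^2 + (1 - w^2) * v^2 = 1"
      using chb_pell[of u M "real j"] by (simp add: w_def v_def V_def)
    define s where "s = (1 - w^2) * v^2"
    have s0: "0 \<le> s" unfolding s_def using wl by (intro mult_nonneg_nonneg) (auto simp: abs_square_le_1)
    have s1: "s \<le> 1" using pell s_def by (smt (verit) zero_le_power2)
    have pf: "poly f (real j) = (v * (1 + w))^4" by (simp add: f_def v_def w_def)
    have "poly f (real j) * (1 - w)^2 = s^2 * (1 + w)^2" unfolding pf s_def
      by (simp add: power2_eq_square algebra_simps eval_nat_numeral)
    also have "\<dots> \<le> 1 * 4"
    proof (rule mult_mono)
      show "s^2 \<le> 1" using s0 s1 by (simp add: power_le_one)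
      show "(1 + w)^2 \<le> 4" using wl power_mono[of "1 + w" 2 2] by simp
    qed auto
    finally have A: "poly f (real j) * (1 - w)^2 \<le> 4" by simp
    have B: "(1 - w)^2 = 4 * (real (j - m0))^2 / (real N)^2" using w by (simp add: power_divide power_mult_distrib)
    have pos: "0 < (real (j - m0))^2" using jm by simp
    have nonneg: "0 \<le> poly f (real j)" unfolding pf by simp
    have "poly f (real j) * (4 * (real (j - m0))^2) \<le> 4 * (real N)^2"
      using A B assms(1) by (simp add: field_simps)
    then have "poly f (real j) \<le> (real N)^2 / (real (j - m0))^2"
      using pos by (simp add: field_simps)
    with nonneg show ?thesis by simp
  qed
  have reidx: "(\<Sum>j\<in>{Suc m0..N}. 1 / (real (j - m0))^2) = (\<Sum>i=1..N - m0. 1 / (real i)^2)"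
    by (rule sum.reindex_bij_witness[where i = "\<lambda>j. j + m0" and j = "\<lambda>i. i - m0"]) auto
  have "16 * (real M)^4 \<le> \<bar>real_of_int (coeff P m0)\<bar> * (16 * (real M)^4)"
  proof -
    have "1 \<le> \<bar>coeff P m0\<bar>" using am0 by linarith
    then have "1 \<le> \<bar>real_of_int (coeff P m0)\<bar>" by linarith
    then show ?thesis by (simp add: mult_le_cancel_right1)
  qed
  also have "\<dots> = \<bar>g m0\<bar>" by (simp add: g_def fm0 abs_mult)
  also have "\<dots> = \<bar>\<Sum>j\<in>{Suc m0..N}. g j\<bar>" using split by simp
  also have "\<dots> \<le> (\<Sum>j\<in>{Suc m0..N}. \<bar>g j\<bar>)" by (rule sum_abs)
  also have "\<dots> \<le> (\<Sum>j\<in>{Suc m0..N}. real W * ((real N)^2 * (1 / (real (j - m0))^2)))"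
  proof (rule sum_mono)
    fix j assume j: "j \<in> {Suc m0..N}"
    have c: "\<bar>real_of_int (coeff P j)\<bar> \<le> real W" using assms(5) by (metis of_int_abs of_int_le_iff of_int_of_nat_eq)
    have "\<bar>g j\<bar> = \<bar>real_of_int (coeff P j)\<bar> * poly f (real j)" using fbound[OF j] by (simp add: g_def abs_mult)
    also have "\<dots> \<le> real W * ((real N)^2 / (real (j - m0))^2)"
      using fbound[OF j] c by (intro mult_mono) auto
    finally show "\<bar>g j\<bar> \<le> real W * ((real N)^2 * (1 / (real (j - m0))^2))" by simp
  qed
  also have "\<dots> = real W * (real N)^2 * (\<Sum>i=1..N - m0. 1 / (real i)^2)"
    unfolding reidx[symmetric] by (simp only: sum_distrib_left mult.assoc)
  also have "\<dots> \<le> real W * (real N)^2 * (5/3)"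
    by (intro mult_left_mono sum_inv_sq') auto
  finally show False using key by simp
qed

end
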